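(* Let $d\geq3$ and $h\geq 3$. Then \[ \nu_2(T(d,h))=\frac{2\big((d-1)^h-1\big)}{d-2}. \]
   Context: $T(d,h)$ is the $d$-regular tree of depth $h$: a rooted tree in which the root has $d$ children, every other vertex at depth less than $h$ has $d-1$ children, and all leaves are at depth $h$. A $2$-matching of a graph is a set of edges such that every vertex is incident to at most two of them; $\nu_2(G)$ is the maximum size of a $2$-matching of $G$. *)

theory Defs
  imports Complex_Main
begin

text \<open>Graphs are given by their edge set, each edge being a two-element set of vertices.\<close>

text \<open>A vertex is the list of child indices along the path
from the root (the root is the empty list).\<close>

definition reg_tree_vertices :: "nat \<Rightarrow> nat \<Rightarrow> nat list set" where
  "reg_tree_vertices d h =
     {xs. length xs \<le> h \<and> (\<forall>i<length xs. xs ! i < (if i = 0 then d else d - 1))}"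

definition reg_tree_edges :: "nat \<Rightarrow> nat \<Rightarrow> nat list set set" where
  "reg_tree_edges d h =
     {{xs, xs @ [j]} | xs j. xs @ [j] \<in> reg_tree_vertices d h}"

definition is_2_matching :: "'a set set \<Rightarrow> 'a set set \<Rightarrow> bool" where
  "is_2_matching E M \<longleftrightarrow> M \<subseteq> E \<and> (\<forall>v. card {e \<in> M. v \<in> e} \<le> 2)"

definition nu2 :: "'a set set \<Rightarrow> nat" where
  "nu2 E = Max (card ` {M. is_2_matching E M})"

end

theory Submission
  imports Defs
begin

definition lev :: "nat \<Rightarrow> nat \<Rightarrow> nat \<Rightarrow> nat list set" where
  "lev d h i = {xs \<in> reg_tree_vertices d h. length xs = i}"

definition Pset :: "nat \<Rightarrow> nat \<Rightarrow> nat list set" where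
  "Pset d h = {xs \<in> reg_tree_vertices d h. odd (h - length xs)}"

definition L :: "nat \<Rightarrow> nat \<Rightarrow> nat" where
  "L d i = (if i = 0 then 1 else d * (d - 1) ^ (i - 1))"

lemma lev_eq:
  assumes "1 \<le> i" "i \<le> h"
  shows "lev d h i = (\<lambda>(x,ys). x#ys) ` ({..<d} \<times> {ys. set ys \<subseteq> {..<d-1} \<and> length ys = i-1})"
proof
  show "lev d h i \<subseteq> (\<lambda>(x,ys). x#ys) ` ({..<d} \<times> {ys. set ys \<subseteq> {..<d-1} \<and> length ys = i-1})"
  proof
    fix xs assume xs: "xs \<in> lev d h i"
    then obtain x ys where e: "xs = x # ys" using assms by (cases xs) (auto simp: lev_def)
    have b: "\<forall>k<length xs. xs ! k < (if k = 0 then d else d - 1)" and l: "length xs = i"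
      using xs by (auto simp: lev_def reg_tree_vertices_def)
    have "x < d" using b e by auto
    moreover have "set ys \<subseteq> {..<d-1}"
    proof
      fix y assume "y \<in> set ys"
      then obtain k where k: "k < length ys" "ys ! k = y" by (auto simp: in_set_conv_nth)
      then show "y \<in> {..<d-1}" using b[rule_format, of "Suc k"] e by auto
    qed
    moreover have "length ys = i - 1" using l e by auto
    ultimately show "xs \<in> (\<lambda>(x,ys). x#ys) ` ({..<d} \<times> {ys. set ys \<subseteq> {..<d-1} \<and> length ys = i-1})"
      using e by auto
  qed
next
  show "(\<lambda>(x,ys). x#ys) ` ({..<d} \<times> {ys. set ys \<subseteq> {..<d-1} \<and> length ys = i-1}) \<subseteq> lev d h i"
  proof
    fix xs assume "xs \<in> (\<lambda>(x,ys). x#ys) ` ({..<d} \<times> {ys. set ys \<subseteq> {..<d-1} \<and> length ys = i-1})"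
    then obtain x ys where e: "xs = x # ys" "x < d" "set ys \<subseteq> {..<d-1}" "length ys = i - 1" by auto
    have "\<forall>k<length xs. xs ! k < (if k = 0 then d else d - 1)"
    proof (intro allI impI)
      fix k assume "k < length xs"
      then show "xs ! k < (if k = 0 then d else d - 1)"
        using e by (cases k) (auto simp: subset_iff)
    qed
    then show "xs \<in> lev d h i" using e assms by (auto simp: lev_def reg_tree_vertices_def)
  qed
qed

lemma card_lev:
  assumes "i \<le> h"
  shows "card (lev d h i) = L d i"
proof (cases "i = 0")
  case True
  then have "lev d h i = {[]}" by (auto simp: lev_def reg_tree_vertices_def)
  then show ?thesis using True by (simp add: L_def)
next
  case False
  have inj: "inj_on (\<lambda>(x,ys). x#ys) ({..<d} \<times> {ys. set ys \<subseteq> {..<d-1} \<and> length ys = i-1})"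
    by (auto simp: inj_on_def)
  have "card (lev d h i) = card ({..<d} \<times> {ys. set ys \<subseteq> {..<d-1} \<and> length ys = i-1})"
    using lev_eq[of i h d] False assms card_image[OF inj] by simp
  also have "\<dots> = d * (d-1)^(i-1)" by (simp add: card_cartesian_product card_lists_length_eq)
  finally show ?thesis using False by (simp add: L_def)
qed

lemma finite_V: "finite (reg_tree_vertices d h)"
proof -
  have "reg_tree_vertices d h \<subseteq> {xs. set xs \<subseteq> {..<d} \<and> length xs \<le> h}"
  proof
    fix xs assume xs: "xs \<in> reg_tree_vertices d h"
    have "set xs \<subseteq> {..<d}"
    proof
      fix y assume "y \<in> set xs"
      then obtain k where k: "k < length xs" "xs ! k = y" by (auto simp: in_set_conv_nth)
      then have "xs ! k < (if k = 0 then d else d - 1)" using xs by (auto simp: reg_tree_vertices_def)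
      then show "y \<in> {..<d}" using k by (auto split: if_splits)
    qed
    then show "xs \<in> {xs. set xs \<subseteq> {..<d} \<and> length xs \<le> h}" using xs by (auto simp: reg_tree_vertices_def)
  qed
  then show ?thesis using finite_lists_length_le[of "{..<d}" h] finite_subset by blast
qed

lemma prefix_V: "xs @ [j] \<in> reg_tree_vertices d h \<Longrightarrow> xs \<in> reg_tree_vertices d h"
proof -
  assume a: "xs @ [j] \<in> reg_tree_vertices d h"
  have "\<forall>k<length xs. xs ! k < (if k = 0 then d else d - 1)"
  proof (intro allI impI)
    fix k assume k: "k < length xs"
    have "(xs@[j]) ! k < (if k = 0 then d else d - 1)" using a k by (auto simp: reg_tree_vertices_def)
    then show "xs ! k < (if k = 0 then d else d - 1)" using k by (simp add: nth_append)
  qed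
  then show ?thesis using a by (auto simp: reg_tree_vertices_def)
qed

lemma finite_E: "finite (reg_tree_edges d h)"
proof -
  have "reg_tree_edges d h \<subseteq> Pow (reg_tree_vertices d h)"
  proof
    fix e assume "e \<in> reg_tree_edges d h"
    then obtain xs j where e: "e = {xs, xs@[j]}" "xs @ [j] \<in> reg_tree_vertices d h"
      unfolding reg_tree_edges_def by blast
    have "xs \<in> reg_tree_vertices d h" by (rule prefix_V[OF e(2)])
    then show "e \<in> Pow (reg_tree_vertices d h)" using e by simp
  qed
  moreover have "finite (Pow (reg_tree_vertices d h))" using finite_V by simp
  ultimately show ?thesis by (rule finite_subset)
qed

lemma upper:
  assumes "is_2_matching (reg_tree_edges d h) M"
  shows "card M \<le> 2 * card (Pset d h)"
proof -
  have ME: "M \<subseteq> reg_tree_edges d h" using assms by (simp add: is_2_matching_def)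
  have fM: "finite M" using ME finite_E finite_subset by blast
  have fP: "finite (Pset d h)" using finite_V by (simp add: Pset_def)
  have sub: "M \<subseteq> (\<Union>v\<in>Pset d h. {e\<in>M. v\<in>e})"
  proof
    fix e assume eM: "e \<in> M"
    then obtain xs j where e: "e = {xs, xs@[j]}" "xs @ [j] \<in> reg_tree_vertices d h"
      using ME by (auto simp: reg_tree_edges_def)
    have xsV: "xs \<in> reg_tree_vertices d h" using prefix_V e by blast
    have lt: "length xs < h" using e by (auto simp: reg_tree_vertices_def)
    show "e \<in> (\<Union>v\<in>Pset d h. {e\<in>M. v\<in>e})"
    proof (cases "odd (h - length xs)")
      case True
      then show ?thesis using eM e xsV by (auto simp: Pset_def)
    next
      case False
      then have "odd (h - length (xs@[j]))" using lt by auto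
      then show ?thesis using eM e by (auto simp: Pset_def)
    qed
  qed
  have "card M \<le> card (\<Union>v\<in>Pset d h. {e\<in>M. v\<in>e})"
    by (rule card_mono) (use fP fM sub in auto)
  also have "\<dots> \<le> (\<Sum>v\<in>Pset d h. card {e\<in>M. v\<in>e})" by (rule card_UN_le[OF fP])
  also have "\<dots> \<le> (\<Sum>v\<in>Pset d h. 2)"
    by (rule sum_mono) (use assms in \<open>auto simp: is_2_matching_def\<close>)
  finally show ?thesis by simp
qed

definition M0 :: "nat \<Rightarrow> nat \<Rightarrow> nat list set set" where
  "M0 d h = (\<lambda>(xs,j). {xs, xs@[j]}) ` (Pset d h \<times> {0..<2})"

lemma M0_sub:
  assumes "d \<ge> 3"
  shows "M0 d h \<subseteq> reg_tree_edges d h"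
proof
  fix e assume "e \<in> M0 d h"
  then obtain xs j where e: "e = {xs, xs@[j]}" "xs \<in> Pset d h" "j < 2" by (auto simp: M0_def)
  have "length xs < h" using e by (auto simp: Pset_def)
  moreover have "\<forall>k<length xs. xs ! k < (if k = 0 then d else d - 1)"
    using e by (auto simp: Pset_def reg_tree_vertices_def)
  ultimately have "xs @ [j] \<in> reg_tree_vertices d h"
  proof -
    assume lt: "length xs < h" and b: "\<forall>k<length xs. xs ! k < (if k = 0 then d else d - 1)"
    have "\<forall>k<length (xs@[j]). (xs@[j]) ! k < (if k = 0 then d else d - 1)"
    proof (intro allI impI)
      fix k assume k: "k < length (xs@[j])"
      show "(xs@[j]) ! k < (if k = 0 then d else d - 1)"
      proof (cases "k < length xs")
        case True
        then show ?thesis using b by (simp add: nth_append)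
      next
        case False
        then have "k = length xs" using k by simp
        then show ?thesis using e(3) assms by (auto simp: nth_append)
      qed
    qed
    then show ?thesis using lt unfolding reg_tree_vertices_def by simp
  qed
  then show "e \<in> reg_tree_edges d h" using e by (auto simp: reg_tree_edges_def)
qed

lemma M0_card: "card (M0 d h) = 2 * card (Pset d h)"
proof -
  have inj: "inj_on (\<lambda>(xs,j). {xs, xs@[j]}) (Pset d h \<times> {0..<(2::nat)})"
  proof (rule inj_onI)
    fix p q :: "nat list \<times> nat"
    assume "(\<lambda>(xs,j). {xs, xs@[j]}) p = (\<lambda>(xs,j). {xs, xs@[j]}) q"
    moreover obtain a j where p: "p = (a,j)" by (cases p)
    moreover obtain b k where q: "q = (b,k)" by (cases q)
    ultimately have eq: "{a, a @ [j]} = {b, b @ [k]}" by simp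
    have "a = b"
    proof (rule ccontr)
      assume "a \<noteq> b"
      then have "a = b @ [k]" "b = a @ [j]" using eq by (auto simp: doubleton_eq_iff)
      then have "length a = Suc (length b)" "length b = Suc (length a)" by simp_all
      then show False by simp
    qed
    then have "j = k" using eq by (auto simp: doubleton_eq_iff)
    then show "p = q" using p q \<open>a = b\<close> by simp
  qed
  show ?thesis unfolding M0_def using card_image[OF inj] by (simp add: card_cartesian_product)
qed

lemma M0_match:
  assumes "d \<ge> 3"
  shows "is_2_matching (reg_tree_edges d h) (M0 d h)"
  unfolding is_2_matching_def
proof (intro conjI allI)
  show "M0 d h \<subseteq> reg_tree_edges d h" using M0_sub[OF assms] .
next
  fix v
  have fin: "finite (M0 d h)" using finite_subset[OF M0_sub[OF assms] finite_E] .
  show "card {e \<in> M0 d h. v \<in> e} \<le> 2"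
  proof (cases "v \<in> Pset d h")
    case True
    have "{e \<in> M0 d h. v \<in> e} \<subseteq> {{v, v@[0]}, {v, v@[1]}}"
    proof
      fix e assume "e \<in> {e \<in> M0 d h. v \<in> e}"
      then obtain xs j where e: "e = {xs, xs@[j]}" "xs \<in> Pset d h" "j < 2" "v \<in> e"
        by (auto simp: M0_def)
      show "e \<in> {{v, v@[0]}, {v, v@[1]}}"
      proof (cases "v = xs")
        case True
        then show ?thesis using e by (auto simp: less_2_cases_iff)
      next
        case False
        then have "v = xs @ [j]" using e by auto
        then have "odd (h - length xs - 1)" using True by (simp add: Pset_def)
        moreover have "length xs < h" using e by (auto simp: Pset_def)
        ultimately show ?thesis using e by (auto simp: Pset_def)
      qed
    qed
    then have "card {e \<in> M0 d h. v \<in> e} \<le> card {{v, v@[0]}, {v, v@[1::nat]}}"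
      by (rule card_mono[rotated]) simp
    also have "\<dots> \<le> 2" by (rule order_trans[OF card_insert_le_m1]) auto
    finally show ?thesis .
  next
    case False
    have "{e \<in> M0 d h. v \<in> e} \<subseteq> {{butlast v, v}}"
    proof
      fix e assume "e \<in> {e \<in> M0 d h. v \<in> e}"
      then obtain xs j where e: "e = {xs, xs@[j]}" "xs \<in> Pset d h" "j < 2" "v \<in> e"
        by (auto simp: M0_def)
      then have "v = xs @ [j]" using False by auto
      then show "e \<in> {{butlast v, v}}" using e by auto
    qed
    then have "card {e \<in> M0 d h. v \<in> e} \<le> card {{butlast v, v}}"
      by (rule card_mono[rotated]) simp
    then show ?thesis by simp
  qed
qed

lemma Pset_card: "card (Pset d h) = (\<Sum>i<h. if odd (h - i) then L d i else 0)"
proof -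
  let ?I = "{i \<in> {..<h}. odd (h - i)}"
  have eq: "Pset d h = (\<Union>i\<in>?I. lev d h i)"
    apply (auto simp: Pset_def lev_def reg_tree_vertices_def)
    by presburger
  have "card (Pset d h) = (\<Sum>i\<in>?I. card (lev d h i))"
    unfolding eq
    by (rule card_UN_disjoint) (auto simp: lev_def intro: finite_subset[OF _ finite_V])
  also have "\<dots> = (\<Sum>i\<in>?I. L d i)" by (rule sum.cong) (auto simp: card_lev)
  also have "\<dots> = (\<Sum>i<h. if odd (h - i) then L d i else 0)" by (rule sum.inter_filter) simp
  finally show ?thesis .
qed

lemma arith:
  assumes "d \<ge> 3" "h \<ge> 1"
  shows "real (\<Sum>i<h. if odd (h - i) then L d i else 0) * (real d - 2) = (real d - 1) ^ h - 1"
  using assms(2)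
proof (induction h rule: less_induct)
  case (less h)
  have dd: "real (d - 1) = real d - 1" using assms by simp
  show ?case
  proof (cases "h \<le> 2")
    case True
    then have "h = 1 \<or> h = 2" using less.prems by auto
    then show ?thesis
      by (auto simp: L_def lessThan_Suc numeral_2_eq_2 algebra_simps power2_eq_square)
  next
    case False
    then obtain k where k: "h = Suc (Suc k)" "k \<ge> 1"
      by (metis One_nat_def Suc_le_eq add_2_eq_Suc le_add_diff_inverse nat_le_linear not_less_eq_eq numeral_2_eq_2)
    have IH: "real (\<Sum>i<k. if odd (k - i) then L d i else 0) * (real d - 2) = (real d - 1) ^ k - 1"
      using less.IH[of k] k by simp
    have "(\<Sum>i<h. if odd (h - i) then L d i else 0)
        = (\<Sum>i<k. if odd (k - i) then L d i else 0) + d * (d-1)^k"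
    proof -
      have "(\<Sum>i<k. if odd (Suc (Suc k) - i) then L d i else 0) = (\<Sum>i<k. if odd (k - i) then L d i else 0)"
        by (rule sum.cong) (auto simp: Suc_diff_le)
      then show ?thesis using k by (simp add: L_def)
    qed
    then have "real (\<Sum>i<h. if odd (h - i) then L d i else 0) * (real d - 2)
        = real (\<Sum>i<k. if odd (k - i) then L d i else 0) * (real d - 2) + real d * (real d - 1)^k * (real d - 2)"
      using dd by (simp add: algebra_simps)
    also have "\<dots> = (real d - 1) ^ h - 1" unfolding IH k
      by (simp add: algebra_simps)
    finally show ?thesis .
  qed
qed

theorem corollary5p5:
  fixes d h :: nat
  assumes "d \<ge> 3" and "h \<ge> 3"
  shows "real (nu2 (reg_tree_edges d h)) = 2 * (real (d - 1) ^ h - 1) / (real d - 2)"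
proof -
  have fin: "finite (card ` {M. is_2_matching (reg_tree_edges d h) M})"
  proof -
    have "{M. is_2_matching (reg_tree_edges d h) M} \<subseteq> Pow (reg_tree_edges d h)"
      by (auto simp: is_2_matching_def)
    then show ?thesis using finite_E finite_subset by blast
  qed
  have "nu2 (reg_tree_edges d h) = 2 * card (Pset d h)"
    unfolding nu2_def
  proof (rule Max_eqI[OF fin])
    fix y assume "y \<in> card ` {M. is_2_matching (reg_tree_edges d h) M}"
    then show "y \<le> 2 * card (Pset d h)" using upper by auto
  next
    show "2 * card (Pset d h) \<in> card ` {M. is_2_matching (reg_tree_edges d h) M}"
      using M0_match[OF assms(1)] M0_card by (metis (mono_tags) image_eqI mem_Collect_eq)
  qed
  moreover have "real (card (Pset d h)) * (real d - 2) = (real d - 1) ^ h - 1"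
    using arith[OF assms(1), of h] assms Pset_card by simp
  moreover have "real (d - 1) = real d - 1" using assms by simp
  moreover have "real d - 2 > 0" using assms by simp
  ultimately show ?thesis by (simp add: field_simps)
qed

end
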